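(* Let $n\ge1$, $s_1\ge1$, let $P$ be any distribution on $[n]$ and let $U_n$ be the uniform distribution on $[n]$. For a multiset $\mathcal S$ of $s_1$ i.i.d. samples, let $S$ be the set of distinct elements of $\mathcal S$ and $U_n(S)=|S|/n$. Then for every $t\in\mathbb R$, $$\Pr_{\mathcal S\sim P^{\otimes s_1}}\big[U_n(S)\ge t\big]\le \Pr_{\mathcal S\sim U_n^{\otimes s_1}}\big[U_n(S)\ge t\big].$$
   Context: $P^{\otimes s_1}$ denotes drawing $s_1$ independent samples from $P$. *)

theory Defs
  imports "HOL-Probability.Probability"
begin

text \<open>Distribution of s i.i.d. samples from P: functions {..<s} \<Rightarrow> elements
  (outside the index set the value is the fixed default "undefined").\<close>
definition iid_samples :: "nat \<Rightarrow> 'a pmf \<Rightarrow> (nat \<Rightarrow> 'a) pmf" where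
  "iid_samples s P = Pi_pmf {..<s} undefined (\<lambda>_. P)"

definition unif_mass_of_support :: "nat \<Rightarrow> nat \<Rightarrow> (nat \<Rightarrow> nat) \<Rightarrow> real" where
  "unif_mass_of_support n s f = real (card (f ` {..<s})) / real n"

end

theory Submission
  imports Defs
begin


lemma pow_ineq:
  fixes x y x' y' :: real
  assumes "0 \<le> x" "x \<le> x'" "x' \<le> y" "x \<le> y'" "y' \<le> y" "x' + y' = x + y"
  shows "x' ^ m + y' ^ m \<le> x ^ m + y ^ m"
proof -
  have e1: "y^m - y'^m = (y - y') * (\<Sum>i<m. y'^(m - Suc i) * y^i)" by (rule power_diff_sumr2)
  have e2: "x'^m - x^m = (x' - x) * (\<Sum>i<m. x^(m - Suc i) * x'^i)" by (rule power_diff_sumr2)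
  have "(\<Sum>i<m. x^(m - Suc i) * x'^i) \<le> (\<Sum>i<m. y'^(m - Suc i) * y^i)"
  proof (rule sum_mono)
    fix i assume "i \<in> {..<m}"
    show "x^(m - Suc i) * x'^i \<le> y'^(m - Suc i) * y^i"
      by (rule mult_mono) (use assms in \<open>auto intro: power_mono\<close>)
  qed
  moreover have "y - y' = x' - x" using assms by simp
  ultimately have "x'^m - x^m \<le> y^m - y'^m"
    unfolding e1 e2 using assms by (metis diff_ge_0_iff_ge mult_left_mono)
  thus ?thesis by simp
qed

lemma pow_ineq2:
  fixes x y x' y' :: real
  assumes "0 \<le> x" "0 \<le> y" "min x y \<le> x'" "x' \<le> max x y" "x' + y' = x + y"
  shows "x' ^ m + y' ^ m \<le> x ^ m + y ^ m"
proof (cases "x \<le> y")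
  case True
  then show ?thesis using pow_ineq[of x x' y y' m] assms by auto
next
  case False
  then show ?thesis using pow_ineq[of y x' x y' m] assms by auto
qed

lemma subset_sum_ineq:
  fixes x y x' y' :: real and Qv :: "nat \<Rightarrow> real"
  assumes M: "finite M" and xy: "0 \<le> x" "0 \<le> y" "min x y \<le> x'" "x' \<le> max x y" "x' + y' = x + y"
    and Qm: "Qv (Suc c0) \<le> Qv (Suc (Suc c0))"
  shows "(\<Sum>T\<in>Pow M. x^card (M - T) * y^card T * Qv (c0 + (if M - T \<noteq> {} then 1 else 0) + (if T \<noteq> {} then 1 else 0)))
      \<le> (\<Sum>T\<in>Pow M. x'^card (M - T) * y'^card T * Qv (c0 + (if M - T \<noteq> {} then 1 else 0) + (if T \<noteq> {} then 1 else 0)))"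
proof (cases "M = {}")
  case True
  then show ?thesis by simp
next
  case ne: False
  define m where "m = card M"
  have key: "(\<Sum>T\<in>Pow M. a^card (M - T) * b^card T * Qv (c0 + (if M - T \<noteq> {} then 1 else 0) + (if T \<noteq> {} then 1 else 0)))
     = Qv (Suc (Suc c0)) * (a + b)^m - (Qv (Suc (Suc c0)) - Qv (Suc c0)) * (a^m + b^m)" for a b :: real
  proof -
    have tot: "(a+b)^m = (\<Sum>T\<in>Pow M. a^card (M - T) * b^card T)"
    proof -
      have "(a+b)^m = (\<Prod>z\<in>M. b + a)" by (simp add: m_def add.commute)
      also have "\<dots> = (\<Sum>X\<in>Pow M. (\<Prod>z\<in>X. b) * (\<Prod>z\<in>M-X. a))" by (rule prod_add[OF M])
      finally show ?thesis by (simp add: mult.commute)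
    qed
    have Qeq: "Qv (c0 + (if M - T \<noteq> {} then 1 else 0) + (if T \<noteq> {} then 1 else 0))
       = Qv (Suc (Suc c0)) - (Qv (Suc (Suc c0)) - Qv (Suc c0)) * (if T \<in> {{}, M} then 1 else 0)" if "T \<in> Pow M" for T
    proof -
      have "M - T = {} \<longleftrightarrow> T = M" using that by auto
      then show ?thesis using ne by (cases "T = {}"; cases "T = M") auto
    qed
    have "(\<Sum>T\<in>Pow M. a^card (M - T) * b^card T * Qv (c0 + (if M - T \<noteq> {} then 1 else 0) + (if T \<noteq> {} then 1 else 0)))
      = (\<Sum>T\<in>Pow M. Qv (Suc (Suc c0)) * (a^card (M - T) * b^card T) - (Qv (Suc (Suc c0)) - Qv (Suc c0)) * (if T \<in> {{}, M} then a^card (M - T) * b^card T else 0))"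
      by (rule sum.cong[OF refl], subst Qeq, simp, simp add: algebra_simps)
    also have "\<dots> = Qv (Suc (Suc c0)) * (a+b)^m - (Qv (Suc (Suc c0)) - Qv (Suc c0)) * (\<Sum>T\<in>Pow M. if T \<in> {{}, M} then a^card (M - T) * b^card T else 0)"
      by (simp add: sum_subtractf sum_distrib_left tot)
    also have "(\<Sum>T\<in>Pow M. if T \<in> {{}, M} then a^card (M - T) * b^card T else 0) = (\<Sum>T\<in>{{}, M}. a^card (M - T) * b^card T)"
      by (subst sum.inter_filter[symmetric]) (use M in \<open>auto intro!: sum.cong\<close>)
    also have "\<dots> = a^m + b^m" using ne by (simp add: m_def)
    finally show ?thesis .
  qed
  show ?thesis unfolding key
    using pow_ineq2[OF xy, of m] Qm xy(5) by (simp add: mult_left_mono)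
qed
definition FF :: "nat set \<Rightarrow> nat \<Rightarrow> (nat \<Rightarrow> real) \<Rightarrow> (nat \<Rightarrow> real) \<Rightarrow> real" where
  "FF A s Q p = (\<Sum>f\<in>PiE {..<s} (\<lambda>_. A). (\<Prod>l<s. p (f l)) * Q (card (f ` {..<s})))"

lemma FF_decomp:
  fixes A :: "nat set" and i j s :: nat and Q q :: "nat \<Rightarrow> real"
  assumes A: "finite A" and ij: "i \<in> A" "j \<in> A" "i \<noteq> j"
  defines "G \<equiv> PiE {..<s} (\<lambda>_. A - {j})"
  defines "Mg \<equiv> (\<lambda>g. {l\<in>{..<s}. g l = i})"
  defines "hf \<equiv> (\<lambda>(g::nat\<Rightarrow>nat, T). (\<lambda>l. if l \<in> T then j else g l))"
  shows "FF A s Q q = (\<Sum>g\<in>G. \<Sum>T\<in>Pow (Mg g). (\<Prod>l<s. q (hf (g,T) l)) * Q (card (hf (g,T) ` {..<s})))"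
proof -
  define kf where "kf = (\<lambda>f::nat\<Rightarrow>nat. ((\<lambda>l. if l < s \<and> f l = j then i else f l), {l\<in>{..<s}. f l = j}))"
  define \<phi> where "\<phi> = (\<lambda>f::nat\<Rightarrow>nat. (\<Prod>l<s. q (f l)) * Q (card (f ` {..<s})))"
  have fin: "finite G" unfolding G_def using A by (simp add: finite_PiE)
  have "(\<Sum>g\<in>G. \<Sum>T\<in>Pow (Mg g). \<phi> (hf (g,T))) = (\<Sum>gT\<in>Sigma G (\<lambda>g. Pow (Mg g)). \<phi> (hf gT))"
    by (subst sum.Sigma) (use fin in \<open>auto simp: Mg_def\<close>)
  also have "\<dots> = (\<Sum>f\<in>PiE {..<s} (\<lambda>_. A). \<phi> f)"
  proof (rule sum.reindex_bij_witness[where i = kf and j = hf])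
    fix a assume a: "a \<in> Sigma G (\<lambda>g. Pow (Mg g))"
    obtain g T where gT: "a = (g, T)" by (cases a)
    have g: "g \<in> G" and T: "T \<subseteq> Mg g" using a gT by auto
    have ext: "\<And>l. l \<notin> {..<s} \<Longrightarrow> g l = undefined" using g unfolding G_def by (auto simp: PiE_def extensional_def)
    have gA: "\<And>l. l < s \<Longrightarrow> g l \<in> A - {j}" using g unfolding G_def by auto
    show "kf (hf a) = a" unfolding gT kf_def hf_def
      using T gA ext ij unfolding Mg_def by (auto simp: fun_eq_iff)
    show "hf a \<in> PiE {..<s} (\<lambda>_. A)" unfolding gT hf_def
      using T gA ext ij unfolding Mg_def by (auto simp: PiE_def extensional_def)
  next
    fix b assume b: "b \<in> PiE {..<s} (\<lambda>_. A)"
    have ext: "\<And>l. l \<notin> {..<s} \<Longrightarrow> b l = undefined" using b by (auto simp: PiE_def extensional_def)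
    have bA: "\<And>l. l < s \<Longrightarrow> b l \<in> A" using b by auto
    show "hf (kf b) = b" unfolding kf_def hf_def using ext by (auto simp: fun_eq_iff)
    show "kf b \<in> Sigma G (\<lambda>g. Pow (Mg g))" unfolding kf_def G_def Mg_def
      using ext bA ij by (auto simp: PiE_def extensional_def)
  qed simp
  finally show ?thesis unfolding FF_def \<phi>_def by simp
qed
lemma fiber_facts:
  fixes g :: "nat \<Rightarrow> nat" and q :: "nat \<Rightarrow> real"
  assumes ij: "i \<noteq> j" and gA: "\<And>l. l < s \<Longrightarrow> g l \<noteq> j"
    and M: "M = {l\<in>{..<s}. g l = i}" and T: "T \<subseteq> M"
  defines "h \<equiv> (\<lambda>l. if l \<in> T then j else g l)"
  shows "(\<Prod>l<s. q (h l)) = (\<Prod>l\<in>{..<s}-M. q (g l)) * (q i ^ card (M - T) * q j ^ card T)"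
    and "card (h ` {..<s}) = card (g ` ({..<s}-M)) + (if M - T \<noteq> {} then 1 else 0) + (if T \<noteq> {} then 1 else 0)"
proof -
  have MT: "M \<subseteq> {..<s}" using M by auto
  have dec: "{..<s} = ({..<s}-M) \<union> ((M - T) \<union> T)" using MT T by auto
  have "(\<Prod>l<s. q (h l)) = (\<Prod>l\<in>({..<s}-M) \<union> ((M - T) \<union> T). q (h l))" using dec by simp
  also have "\<dots> = (\<Prod>l\<in>{..<s}-M. q (h l)) * ((\<Prod>l\<in>M-T. q (h l)) * (\<Prod>l\<in>T. q (h l)))"
  proof -
    have f1: "finite ({..<s}-M)" "finite (M - T)" "finite T" using MT T by (auto intro: finite_subset)
    show ?thesis
    proof -
      have d1: "({..<s}-M) \<inter> ((M - T) \<union> T) = {}" "(M - T) \<inter> T = {}" using T by auto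
      show ?thesis using prod.union_disjoint[OF f1(1) finite_UnI[OF f1(2,3)] d1(1), of "\<lambda>l. q (h l)"]
        prod.union_disjoint[OF f1(2) f1(3) d1(2), of "\<lambda>l. q (h l)"] by simp
    qed
  qed
  also have "(\<Prod>l\<in>{..<s}-M. q (h l)) = (\<Prod>l\<in>{..<s}-M. q (g l))"
    by (rule prod.cong) (use T in \<open>auto simp: h_def\<close>)
  also have "(\<Prod>l\<in>M-T. q (h l)) = q i ^ card (M - T)"
    using M by (subst prod.cong[where h = "\<lambda>_. q i"]) (auto simp: h_def)
  also have "(\<Prod>l\<in>T. q (h l)) = q j ^ card T"
    by (subst prod.cong[where h = "\<lambda>_. q j"]) (auto simp: h_def)
  finally show "(\<Prod>l<s. q (h l)) = (\<Prod>l\<in>{..<s}-M. q (g l)) * (q i ^ card (M - T) * q j ^ card T)" .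
  have im: "h ` {..<s} = g ` ({..<s}-M) \<union> ((if M - T \<noteq> {} then {i} else {}) \<union> (if T \<noteq> {} then {j} else {}))"
    using dec M T unfolding h_def by (auto simp: image_iff)
  have disj: "g ` ({..<s}-M) \<inter> ((if M - T \<noteq> {} then {i} else {}) \<union> (if T \<noteq> {} then {j} else {})) = {}"
    using M gA by auto
  show "card (h ` {..<s}) = card (g ` ({..<s}-M)) + (if M - T \<noteq> {} then 1 else 0) + (if T \<noteq> {} then 1 else 0)"
    unfolding im by (subst card_Un_disjoint) (use disj ij in auto)
qed
lemma FF_step:
  fixes A :: "nat set" and i j s :: nat and Q p :: "nat \<Rightarrow> real" and x' y' :: real
  assumes A: "finite A" and ij: "i \<in> A" "j \<in> A" "i \<noteq> j"
    and nn: "\<And>a. a \<in> A \<Longrightarrow> 0 \<le> p a"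
    and Qm: "\<And>c. Q c \<le> Q (Suc c)"
    and xb: "min (p i) (p j) \<le> x'" "x' \<le> max (p i) (p j)" "x' + y' = p i + p j"
  shows "FF A s Q p \<le> FF A s Q (p(i := x', j := y'))"
proof -
  define G where "G = PiE {..<s} (\<lambda>_. A - {j})"
  define Mg where "Mg = (\<lambda>g::nat\<Rightarrow>nat. {l\<in>{..<s}. g l = i})"
  define hf where "hf = (\<lambda>(g::nat\<Rightarrow>nat, T::nat set). (\<lambda>l. if l \<in> T then j else g l))"
  define p' where "p' = p(i := x', j := y')"
  have D: "FF A s Q q = (\<Sum>g\<in>G. \<Sum>T\<in>Pow (Mg g). (\<Prod>l<s. q (hf (g,T) l)) * Q (card (hf (g,T) ` {..<s})))" for q
    unfolding G_def Mg_def hf_def by (rule FF_decomp[OF A ij])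
  have W: "(\<Sum>T\<in>Pow (Mg g). (\<Prod>l<s. q (hf (g,T) l)) * Q (card (hf (g,T) ` {..<s})))
     = (\<Prod>l\<in>{..<s}-Mg g. q (g l)) * (\<Sum>T\<in>Pow (Mg g). q i ^ card (Mg g - T) * q j ^ card T *
         Q (card (g ` ({..<s}-Mg g)) + (if Mg g - T \<noteq> {} then 1 else 0) + (if T \<noteq> {} then 1 else 0)))"
    if g: "g \<in> G" for g q
  proof -
    have gj: "\<And>l. l < s \<Longrightarrow> g l \<noteq> j" using g unfolding G_def by auto
    show ?thesis unfolding sum_distrib_left
    proof (rule sum.cong[OF refl])
      fix T assume "T \<in> Pow (Mg g)"
      hence T: "T \<subseteq> Mg g" by auto
      have Mg: "Mg g = {l\<in>{..<s}. g l = i}" by (simp add: Mg_def)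
      note ff = fiber_facts(1)[OF ij(3) gj Mg T, where q = q] fiber_facts(2)[OF ij(3) gj Mg T]
      show "(\<Prod>l<s. q (hf (g,T) l)) * Q (card (hf (g,T) ` {..<s})) =
        (\<Prod>l\<in>{..<s}-Mg g. q (g l)) * (q i ^ card (Mg g - T) * q j ^ card T *
         Q (card (g ` ({..<s}-Mg g)) + (if Mg g - T \<noteq> {} then 1 else 0) + (if T \<noteq> {} then 1 else 0)))"
        using ff unfolding hf_def by (simp add: mult.assoc)
    qed
  qed
  show ?thesis
    unfolding D p'_def[symmetric]
  proof (rule sum_mono)
    fix g assume g: "g \<in> G"
    have gA: "\<And>l. l < s \<Longrightarrow> g l \<in> A - {j}" using g unfolding G_def by auto
    have weq: "(\<Prod>l\<in>{..<s}-Mg g. p' (g l)) = (\<Prod>l\<in>{..<s}-Mg g. p (g l))"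
      by (rule prod.cong[OF refl]) (use gA in \<open>auto simp: p'_def Mg_def\<close>)
    have wnn: "0 \<le> (\<Prod>l\<in>{..<s}-Mg g. p (g l))"
      by (rule prod_nonneg) (use gA nn in auto)
    have "(\<Sum>T\<in>Pow (Mg g). p i ^ card (Mg g - T) * p j ^ card T *
         Q (card (g ` ({..<s}-Mg g)) + (if Mg g - T \<noteq> {} then 1 else 0) + (if T \<noteq> {} then 1 else 0)))
      \<le> (\<Sum>T\<in>Pow (Mg g). x' ^ card (Mg g - T) * y' ^ card T *
         Q (card (g ` ({..<s}-Mg g)) + (if Mg g - T \<noteq> {} then 1 else 0) + (if T \<noteq> {} then 1 else 0)))"
      by (rule subset_sum_ineq) (use xb nn ij Qm in \<open>auto simp: Mg_def\<close>)
    moreover have "p' i = x'" "p' j = y'" using ij by (auto simp: p'_def)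
    ultimately show "(\<Sum>T\<in>Pow (Mg g). (\<Prod>l<s. p (hf (g,T) l)) * Q (card (hf (g,T) ` {..<s})))
      \<le> (\<Sum>T\<in>Pow (Mg g). (\<Prod>l<s. p' (hf (g,T) l)) * Q (card (hf (g,T) ` {..<s})))"
      unfolding W[OF g] weq using wnn by (simp add: mult_left_mono)
  qed
qed

lemma FF_cong:
  assumes "\<And>a. a \<in> A \<Longrightarrow> p a = q a"
  shows "FF A s Q p = FF A s Q q"
  unfolding FF_def using assms by (intro sum.cong refl arg_cong2[where f = "(*)"] prod.cong) auto

lemma sum_upd2:
  fixes p :: "nat \<Rightarrow> real"
  assumes "finite A" "i \<in> A" "j \<in> A" "i \<noteq> j"
  shows "sum (p(i := x', j := y')) A = sum p A - p i - p j + x' + y'"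
proof -
  have "sum q A = sum q (A - {i, j}) + q i + q j" for q :: "nat \<Rightarrow> real"
  proof -
    have "A = insert i (insert j (A - {i,j}))" using assms by auto
    then have "sum q A = sum q (insert i (insert j (A - {i,j})))" by simp
    also have "\<dots> = q i + (q j + sum q (A - {i,j}))" using assms by simp
    finally show ?thesis by simp
  qed
  moreover have "sum (p(i := x', j := y')) (A - {i,j}) = sum p (A - {i,j})"
    by (rule sum.cong) auto
  ultimately show ?thesis using assms by simp
qed

lemma FF_unif:
  fixes A :: "nat set" and Q :: "nat \<Rightarrow> real"
  assumes A: "finite A" "A \<noteq> {}" and Qm: "\<And>c. Q c \<le> Q (Suc c)"
  shows "\<forall>p. card {a\<in>A. p a \<noteq> 1 / real (card A)} = N \<longrightarrow> (\<forall>a\<in>A. 0 \<le> p a) \<longrightarrow> sum p A = 1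
     \<longrightarrow> FF A s Q p \<le> FF A s Q (\<lambda>_. 1 / real (card A))"
proof (induction N rule: less_induct)
  case (less N)
  define u where "u = 1 / real (card A)"
  have cA: "real (card A) > 0" using A by (simp add: card_gt_0_iff)
  have su: "sum (\<lambda>_. u) A = 1" using cA by (simp add: u_def)
  show ?case unfolding u_def[symmetric]
  proof (intro allI impI)
    fix p :: "nat \<Rightarrow> real"
    assume N: "card {a\<in>A. p a \<noteq> u} = N" and nn: "\<forall>a\<in>A. 0 \<le> p a" and s1: "sum p A = 1"
    show "FF A s Q p \<le> FF A s Q (\<lambda>_. u)"
    proof (cases "\<forall>a\<in>A. p a = u")
      case True
      then show ?thesis by (intro order_eq_refl FF_cong) simp
    next
      case False
      then obtain a0 where a0: "a0 \<in> A" "p a0 \<noteq> u" by auto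
      have "\<exists>i\<in>A. p i > u"
      proof (rule ccontr)
        assume "\<not> ?thesis"
        hence le: "\<forall>a\<in>A. p a \<le> u" by auto
        hence "p a0 < u" using a0 by force
        hence "sum p A < sum (\<lambda>_. u) A" using le a0 A(1) by (intro sum_strict_mono_ex1) auto
        thus False using s1 su by simp
      qed
      then obtain i where i: "i \<in> A" "p i > u" by auto
      have "\<exists>j\<in>A. p j < u"
      proof (rule ccontr)
        assume "\<not> ?thesis"
        hence le: "\<forall>a\<in>A. u \<le> p a" by auto
        hence "sum (\<lambda>_. u) A < sum p A" using le i A(1) by (intro sum_strict_mono_ex1) auto
        thus False using s1 su by simp
      qed
      then obtain j where j: "j \<in> A" "p j < u" by auto
      have ij: "i \<noteq> j" using i j by auto
      define x' y' where "x' = (if p i - u \<le> u - p j then u else p i - (u - p j))"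
        and "y' = (if p i - u \<le> u - p j then p j + (p i - u) else u)"
      define p' where "p' = p(i := x', j := y')"
      have xb: "min (p i) (p j) \<le> x'" "x' \<le> max (p i) (p j)" "x' + y' = p i + p j"
        using i j by (auto simp: x'_def y'_def)
      have step: "FF A s Q p \<le> FF A s Q p'"
        unfolding p'_def by (rule FF_step[where p = p and Q = Q, OF A(1) i(1) j(1) ij _ Qm xb]) (use nn in auto)
      have pi': "p' i = x'" and pj': "p' j = y'" and po: "\<And>a. a \<noteq> i \<Longrightarrow> a \<noteq> j \<Longrightarrow> p' a = p a"
        using ij by (auto simp: p'_def)
      have pi0: "0 \<le> p i" "0 \<le> p j" using nn i j by auto
      have x0: "0 \<le> x'" "0 \<le> y'" using xb pi0 by (simp_all add: min_def max_def split: if_splits)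
      have nn': "\<forall>a\<in>A. 0 \<le> p' a"
      proof
        fix a assume "a \<in> A"
        then show "0 \<le> p' a" using nn x0 pi' pj' po[of a] by (cases "a = i"; cases "a = j") auto
      qed
      have s1': "sum p' A = 1" unfolding p'_def
        using sum_upd2[OF A(1) i(1) j(1) ij] xb s1 by simp
      have sub: "{a\<in>A. p' a \<noteq> u} \<subset> {a\<in>A. p a \<noteq> u}"
      proof (cases "p i - u \<le> u - p j")
        case True
        hence "x' = u" by (simp add: x'_def)
        hence xu: "x' = u" .
        have "p a \<noteq> u \<and> a \<noteq> i" if "a \<in> A" "p' a \<noteq> u" for a
          using that j pi' po[of a] xu by (cases "a = i"; cases "a = j") auto
        hence "{a\<in>A. p' a \<noteq> u} \<subseteq> {a\<in>A. p a \<noteq> u} - {i}" by auto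
        then show ?thesis using i by auto
      next
        case False
        hence "y' = u" by (simp add: y'_def)
        hence yu: "y' = u" .
        have "p a \<noteq> u \<and> a \<noteq> j" if "a \<in> A" "p' a \<noteq> u" for a
          using that i ij pi' pj' po[of a] yu by (cases "a = i"; cases "a = j") auto
        hence "{a\<in>A. p' a \<noteq> u} \<subseteq> {a\<in>A. p a \<noteq> u} - {j}" by auto
        then show ?thesis using j by auto
      qed
      have lt: "card {a\<in>A. p' a \<noteq> u} < N"
        unfolding N[symmetric] by (rule psubset_card_mono) (use A(1) sub in auto)
      have "FF A s Q p' \<le> FF A s Q (\<lambda>_. u)"
      proof -
        have "\<forall>p. card {a\<in>A. p a \<noteq> u} = card {a\<in>A. p' a \<noteq> u} \<longrightarrow> (\<forall>a\<in>A. 0 \<le> p a) \<longrightarrow> sum p A = 1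
           \<longrightarrow> FF A s Q p \<le> FF A s Q (\<lambda>_. u)" using less.IH[OF lt] unfolding u_def .
        then show ?thesis using nn' s1' by blast
      qed
      with step show ?thesis by simp
    qed
  qed
qed

lemma prob_FF:
  fixes P :: "nat pmf" and A :: "nat set" and E :: "(nat \<Rightarrow> nat) set"
  assumes A: "finite A" and PA: "set_pmf P \<subseteq> A"
  shows "measure_pmf.prob (Pi_pmf {..<s} undefined (\<lambda>_. P)) E
     = (\<Sum>f\<in>PiE {..<s} (\<lambda>_. A). (\<Prod>l<s. pmf P (f l)) * (if f \<in> E then 1 else 0))"
proof -
  let ?M = "Pi_pmf {..<s} undefined (\<lambda>_. P)"
  let ?B = "PiE {..<s} (\<lambda>_. A)"
  have finB: "finite ?B" using A by (simp add: finite_PiE)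
  have sub: "set_pmf ?M \<subseteq> ?B"
    using set_Pi_pmf_subset'[of "{..<s}" undefined "\<lambda>_. P"] PA
    by (auto simp: PiE_dflt_def PiE_def extensional_def)
  have "measure_pmf.prob ?M E = measure_pmf.prob ?M (E \<inter> set_pmf ?M)"
    by (simp add: measure_Int_set_pmf)
  also have "E \<inter> set_pmf ?M = (E \<inter> ?B) \<inter> set_pmf ?M" using sub by auto
  also have "measure_pmf.prob ?M \<dots> = measure_pmf.prob ?M (E \<inter> ?B)"
    by (simp add: measure_Int_set_pmf)
  also have "\<dots> = sum (pmf ?M) (E \<inter> ?B)"
    by (rule measure_measure_pmf_finite) (use finB in auto)
  also have "\<dots> = (\<Sum>f\<in>?B. if f \<in> E then pmf ?M f else 0)"
    by (subst sum.inter_filter[symmetric]) (use finB in \<open>auto intro!: sum.cong\<close>)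
  also have "\<dots> = (\<Sum>f\<in>?B. (\<Prod>l<s. pmf P (f l)) * (if f \<in> E then 1 else 0))"
  proof (rule sum.cong[OF refl])
    fix f assume f: "f \<in> ?B"
    have "pmf ?M f = (\<Prod>l<s. pmf P (f l))"
      by (rule pmf_Pi') (use f in \<open>auto simp: PiE_def extensional_def\<close>)
    then show "(if f \<in> E then pmf ?M f else 0) = (\<Prod>l<s. pmf P (f l)) * (if f \<in> E then 1 else 0)" by simp
  qed
  finally show ?thesis .
qed
theorem lemma3p3:
  fixes n s1 :: nat and P :: "nat pmf" and t :: real
  assumes "n \<ge> 1" and "s1 \<ge> 1"
    and "set_pmf P \<subseteq> {1..n}"
  shows "measure_pmf.prob (iid_samples s1 P)
           {f. unif_mass_of_support n s1 f \<ge> t}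
         \<le> measure_pmf.prob (iid_samples s1 (pmf_of_set {1..n}))
           {f. unif_mass_of_support n s1 f \<ge> t}"
proof -
  define A where "A = {1..n}"
  define Q where "Q = (\<lambda>c::nat. if t \<le> real c / real n then 1 else (0::real))"
  define E where "E = {f. unif_mass_of_support n s1 f \<ge> t}"
  have A: "finite A" "A \<noteq> {}" using assms(1) by (auto simp: A_def)
  have cA: "card A = n" by (simp add: A_def)
  have Qm: "Q c \<le> Q (Suc c)" for c
  proof -
    have "real c / real n \<le> real (Suc c) / real n" using assms(1) by (simp add: divide_right_mono)
    then show ?thesis by (auto simp: Q_def)
  qed
  have PF: "measure_pmf.prob (iid_samples s1 R) E = FF A s1 Q (pmf R)" if R: "set_pmf R \<subseteq> A" for R
    unfolding iid_samples_def prob_FF[OF A(1) R] FF_def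
    by (rule sum.cong[OF refl]) (simp add: E_def Q_def unif_mass_of_support_def)
  have UA: "set_pmf (pmf_of_set {1..n}) \<subseteq> A" using A by (simp add: A_def)
  have "FF A s1 Q (pmf P) \<le> FF A s1 Q (\<lambda>_. 1 / real (card A))"
    using FF_unif[where Q = Q, OF A Qm, of "card {a\<in>A. pmf P a \<noteq> 1 / real (card A)}" s1] assms(3)
    by (simp add: A_def sum_pmf_eq_1)
  also have "\<dots> = FF A s1 Q (pmf (pmf_of_set {1..n}))"
    by (rule FF_cong) (use A in \<open>simp add: A_def\<close>)
  finally show ?thesis unfolding E_def[symmetric] PF[OF assms(3)[folded A_def]] PF[OF UA] .
qed
end
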